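(* Consider the problem of minimizing $f(x)$ subject to $g(x)\in\Theta$, where $\Theta\subset\mathbb{R}^m$ is a nonempty convex polyhedron, and let $\bar x$ be a local minimizer. Assume $f:\mathbb{R}^n\to\mathbb{R}$ is of class $\mathcal C^{1,1}$ around $\bar x$, $g:\mathbb{R}^n\to\mathbb{R}^m$ is $\mathcal C^2$-smooth around $\bar x$, and MSCQ holds at $\bar x$. Then there exists $\bar y\in N_\Theta(g(\bar x))$ with $\nabla f(\bar x)+\nabla g(\bar x)^*\bar y=0$. If moreover such $\bar y$ is unique, then $$\langle z,w\rangle+\langle w,\nabla^2\langle\bar y,g\rangle(\bar x)w\rangle\ge0\quad\text{for all } w\in-K_\Gamma(\bar x,-\nabla f(\bar x)),\ z\in\breve\partial^2f(\bar x)(w).$$ If $\bar x$ is a strong local minimizer with modulus $\sigma>0$ (and $\bar y$ is unique), then $$\langle z,w\rangle+\langle w,\nabla^2\langle\bar y,g\rangle(\bar x)w\rangle\ge\sigma\|w\|^2\quad\text{for all } w\in-K_\Gamma(\bar x,-\nabla f(\bar x)),\ z\in\breve\partial^2f(\bar x)(w).$$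
   Context: $\Gamma:=\{x\in\mathbb{R}^n:g(x)\in\Theta\}$. $\mathcal C^{1,1}$ around $\bar x$: continuously differentiable with locally Lipschitz gradient near $\bar x$. MSCQ at $\bar x\in\Gamma$: there exist a neighborhood $U$ of $\bar x$ and $\kappa>0$ with $\operatorname{dist}(x;\Gamma)\le\kappa\operatorname{dist}(g(x);\Theta)$ for all $x\in U$. $N_\Theta$ is the normal cone of convex analysis. Tangent cone $T_\Omega(\bar x):=\{w:\exists t_k\downarrow0,\ w_k\to w,\ \bar x+t_kw_k\in\Omega\}$; critical cone $K_\Omega(\bar x,\bar v):=T_\Omega(\bar x)\cap\{\bar v\}^\perp$. $\nabla^2\langle y,g\rangle(x)$ is the Hessian of $x\mapsto\langle y,g(x)\rangle$. For $\mathcal C^1$ $f$, $\breve\partial^2f(\bar x)(w):=\widehat D^*(\nabla f)(\bar x)(w)=\{z:(z,-w)\in\widehat N_{\operatorname{gph}\nabla f}(\bar x,\nabla f(\bar x))\}$ with $\widehat N$ the regular (Fréchet) normal cone. Strong local minimizer with modulus $\sigma$: $f(x)\ge f(\bar x)+\frac\sigma2\|x-\bar x\|^2$ for feasible $x$ near $\bar x$. *)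

theory Defs
  imports "HOL-Analysis.Analysis"
begin

definition normal_cone :: "'a::real_inner set \<Rightarrow> 'a \<Rightarrow> 'a set" where
  "normal_cone \<Theta> v = {y. \<forall>u\<in>\<Theta>. inner y (u - v) \<le> 0}"

definition regular_normal_cone :: "'a::real_inner set \<Rightarrow> 'a \<Rightarrow> 'a set" where
  "regular_normal_cone \<Omega> z0 =
     {v. \<forall>\<epsilon>>0. \<exists>\<delta>>0. \<forall>z\<in>\<Omega>. norm (z - z0) < \<delta> \<longrightarrow>
            inner v (z - z0) \<le> \<epsilon> * norm (z - z0)}"

definition tangent_cone :: "'a::real_normed_vector set \<Rightarrow> 'a \<Rightarrow> 'a set" where
  "tangent_cone \<Omega> x0 =
     {w. \<exists>t wk. (\<forall>k. t k > 0) \<and> t \<longlonglongrightarrow> 0 \<and> wk \<longlonglongrightarrow> w \<and>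
              (\<forall>k. x0 + t k *\<^sub>R wk k \<in> \<Omega>)}"

definition critical_cone :: "'a::real_inner set \<Rightarrow> 'a \<Rightarrow> 'a \<Rightarrow> 'a set" where
  "critical_cone \<Omega> x0 v = tangent_cone \<Omega> x0 \<inter> {w. inner v w = 0}"

text \<open>Regular second-order subdifferential of a C1 function with gradient Df at x0:
  the regular coderivative of Df at (x0, Df x0) applied to w.\<close>
definition regular_second_subdiff ::
  "('a::real_inner \<Rightarrow> 'a) \<Rightarrow> 'a \<Rightarrow> 'a \<Rightarrow> 'a set" where
  "regular_second_subdiff Df x0 w =
     {z. (z, - w) \<in> regular_normal_cone {(x, Df x) | x. True} (x0, Df x0)}"

end

theory Submission
  imports Defs
begin


lemma peano2:
  fixes \<phi> \<phi>1 :: "real \<Rightarrow> real"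
  assumes d: "\<delta> > 0"
    and der: "\<And>t. 0 \<le> t \<Longrightarrow> t < \<delta> \<Longrightarrow> (\<phi> has_real_derivative \<phi>1 t) (at t)"
    and der2: "(\<phi>1 has_real_derivative a2) (at 0)"
    and e: "\<epsilon> > 0"
  shows "\<exists>\<eta>>0. \<forall>t. 0 < t \<and> t < \<eta> \<longrightarrow> \<bar>\<phi> t - \<phi> 0 - t * \<phi>1 0 - t\<^sup>2 / 2 * a2\<bar> \<le> \<epsilon> * t\<^sup>2"
proof -
  have "((*) a2) = (\<lambda>h. h * a2)" by (auto simp: mult.commute)
  then have "(\<phi>1 has_derivative (\<lambda>h. h * a2)) (at 0)" using der2
    by (simp add: has_field_derivative_def)
  then obtain d2 where d2: "d2 > 0" "\<And>y. norm (y - 0) < d2 \<Longrightarrow> norm (\<phi>1 y - \<phi>1 0 - (y - 0) * a2) \<le> \<epsilon> * norm (y - 0)"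
    unfolding has_derivative_at_alt using e by blast
  define \<eta> where "\<eta> = min \<delta> d2"
  have "\<forall>t. 0 < t \<and> t < \<eta> \<longrightarrow> \<bar>\<phi> t - \<phi> 0 - t * \<phi>1 0 - t\<^sup>2 / 2 * a2\<bar> \<le> \<epsilon> * t\<^sup>2"
  proof (intro allI impI)
    fix t assume t: "0 < t \<and> t < \<eta>"
    define \<psi> where "\<psi> s = \<phi> s - \<phi> 0 - s * \<phi>1 0 - s\<^sup>2 / 2 * a2" for s
    have D: "(\<psi> has_real_derivative (\<phi>1 s - \<phi>1 0 - s * a2)) (at s)" if "0 \<le> s" "s \<le> t" for s
      unfolding \<psi>_def
      using t that by (auto intro!: derivative_eq_intros der simp: \<eta>_def power2_eq_square)
    obtain \<xi> where \<xi>: "0 < \<xi>" "\<xi> < t" "\<psi> t - \<psi> 0 = (t - 0) * (\<phi>1 \<xi> - \<phi>1 0 - \<xi> * a2)"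
      using MVT2[of 0 t \<psi>, OF _ D] t by auto
    have "\<bar>\<phi>1 \<xi> - \<phi>1 0 - \<xi> * a2\<bar> \<le> \<epsilon> * \<xi>"
      using d2(2)[of \<xi>] \<xi> t by (auto simp: \<eta>_def)
    then have "\<bar>\<psi> t\<bar> \<le> t * (\<epsilon> * \<xi>)" using \<xi> t by (simp add: \<psi>_def abs_mult)
    also have "\<dots> \<le> t * (\<epsilon> * t)" using \<xi> t e by (intro mult_left_mono) auto
    finally show "\<bar>\<phi> t - \<phi> 0 - t * \<phi>1 0 - t\<^sup>2 / 2 * a2\<bar> \<le> \<epsilon> * t\<^sup>2"
      by (simp add: \<psi>_def power2_eq_square mult_ac)
  qed
  moreover have "\<eta> > 0" using d d2 by (simp add: \<eta>_def)
  ultimately show ?thesis by blast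
qed

lemma upper_quad:
  fixes \<phi> \<phi>d :: "real \<Rightarrow> real"
  assumes der: "\<And>s. 0 \<le> s \<Longrightarrow> s \<le> t \<Longrightarrow> (\<phi> has_real_derivative \<phi>d s) (at s)"
    and bd: "\<And>s. 0 \<le> s \<Longrightarrow> s \<le> t \<Longrightarrow> \<phi>d s \<le> s * C"
    and t: "0 \<le> t"
  shows "\<phi> t \<le> \<phi> 0 + t\<^sup>2 / 2 * C"
proof -
  define \<psi> where "\<psi> s = \<phi> s - s\<^sup>2 / 2 * C" for s
  have "\<psi> 0 \<ge> \<psi> t"
  proof (rule DERIV_nonpos_imp_nonincreasing[OF t])
    fix x assume x: "0 \<le> x" "x \<le> t"
    have "(\<psi> has_real_derivative (\<phi>d x - x * C)) (at x)" unfolding \<psi>_def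
      using x by (auto intro!: derivative_eq_intros der simp: power2_eq_square)
    then show "\<exists>y. (\<psi> has_real_derivative y) (at x) \<and> y \<le> 0" using bd[OF x] by auto
  qed
  then show ?thesis by (simp add: \<psi>_def)
qed



lemma f_quad:
  fixes f :: "'a::real_inner \<Rightarrow> real"
  assumes der: "\<forall>x\<in>ball c \<delta>. (f has_derivative (\<lambda>h. inner (Df x) h)) (at x)"
    and lip: "\<forall>x\<in>ball c \<delta>. \<forall>y\<in>ball c \<delta>. norm (Df x - Df y) \<le> L * dist x y"
    and x: "x \<in> ball c \<delta>" and y: "y \<in> ball c \<delta>"
  shows "\<bar>f x - f y - inner (Df y) (x - y)\<bar> \<le> L * (norm (x - y))\<^sup>2"
proof -
  define p where "p s = y + s *\<^sub>R (x - y)" for s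
  have pin: "p s \<in> ball c \<delta>" if "0 \<le> s" "s \<le> 1" for s
  proof -
    have "p s = (1 - s) *\<^sub>R y + s *\<^sub>R x" by (simp add: p_def algebra_simps)
    then show ?thesis using convexD_alt[OF convex_ball y x that] by simp
  qed
  have D: "((\<lambda>s. f (p s)) has_real_derivative inner (Df (p s)) (x - y)) (at s)" if "0 \<le> s" "s \<le> 1" for s
  proof -
    have "((\<lambda>s. f (p s)) has_derivative (\<lambda>h. inner (Df (p s)) (h *\<^sub>R (x - y)))) (at s)"
      unfolding p_def
      apply (rule has_derivative_compose[where f="\<lambda>s. y + s *\<^sub>R (x - y)", unfolded o_def])
      apply (auto intro!: derivative_eq_intros)[1]
      using der pin[OF that] unfolding p_def by auto
    moreover have "(\<lambda>h. inner (Df (p s)) (h *\<^sub>R (x - y))) = (*) (inner (Df (p s)) (x - y))"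
      by (auto simp: fun_eq_iff)
    ultimately show ?thesis
      by (simp add: has_field_derivative_def)
  qed
  obtain \<xi> where \<xi>: "0 < \<xi>" "\<xi> < 1" "f (p 1) - f (p 0) = (1 - 0) * inner (Df (p \<xi>)) (x - y)"
    using MVT2[of 0 1 "\<lambda>s. f (p s)", OF _ D] by auto
  have "\<bar>f x - f y - inner (Df y) (x - y)\<bar> = \<bar>inner (Df (p \<xi>) - Df y) (x - y)\<bar>"
    using \<xi> by (simp add: p_def inner_diff_left)
  also have "\<dots> \<le> norm (Df (p \<xi>) - Df y) * norm (x - y)" by (rule Cauchy_Schwarz_ineq2)
  also have "\<dots> \<le> (L * dist (p \<xi>) y) * norm (x - y)"
    using lip pin[of \<xi>] \<xi> y by (intro mult_right_mono) auto
  also have "dist (p \<xi>) y = \<xi> * norm (x - y)" using \<xi> by (simp add: p_def dist_norm)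
  also have "L * (\<xi> * norm (x - y)) * norm (x - y) \<le> L * (norm (x - y))\<^sup>2"
  proof -
    show ?thesis
    proof (cases "x = y")
      case True
      then show ?thesis by simp
    next
      case False
      have L: "L \<ge> 0"
      proof -
      have "0 \<le> norm (Df x - Df y)" by simp
      also have "\<dots> \<le> L * dist x y" using lip x y by auto
      finally show ?thesis using False by (simp add: zero_le_mult_iff)
      qed
      have "\<xi> * (norm (x - y) * norm (x - y)) \<le> 1 * (norm (x - y) * norm (x - y))"
        using \<xi> by (intro mult_right_mono) auto
      then show ?thesis using L by (simp add: power2_eq_square mult_left_mono mult_ac)
    qed
  qed
  finally show ?thesis .
qed



lemma fcone_hull:
  assumes "finite A"
  shows "{\<Sum>p\<in>A. l p *\<^sub>R h p | l. \<forall>p\<in>A. (0::real) \<le> l p} = convex_cone hull (h ` A)"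
    (is "?C = _")
proof
  show "?C \<subseteq> convex_cone hull (h ` A)"
  proof clarify
    fix l :: "_ \<Rightarrow> real" assume l: "\<forall>p\<in>A. 0 \<le> l p"
    show "(\<Sum>p\<in>A. l p *\<^sub>R h p) \<in> convex_cone hull (h ` A)"
      using assms l
    proof (induction A rule: finite_induct)
      case empty then show ?case by (simp add: convex_cone_hull_contains_0)
    next
      case (insert x F)
      have "l x *\<^sub>R h x \<in> convex_cone hull (h ` insert x F)"
        using insert by (intro convex_cone_hull_mul) (auto intro: hull_inc)
      moreover have "(\<Sum>p\<in>F. l p *\<^sub>R h p) \<in> convex_cone hull (h ` insert x F)"
        using insert hull_mono[of "h ` F" "h ` insert x F"] by auto
      ultimately show ?case using insert by (simp add: convex_cone_hull_add)
    qed
  qed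
next
  have cc: "convex_cone ?C"
    unfolding convex_cone_iff
  proof (intro conjI ballI allI impI)
    show "0 \<in> ?C" by (rule CollectI, rule exI[of _ "\<lambda>_. 0"]) auto
  next
    fix x y assume "x \<in> ?C" "y \<in> ?C"
    then obtain l1 l2 where "x = (\<Sum>p\<in>A. l1 p *\<^sub>R h p)" "\<forall>p\<in>A. 0 \<le> l1 p"
      "y = (\<Sum>p\<in>A. l2 p *\<^sub>R h p)" "\<forall>p\<in>A. 0 \<le> l2 p" by auto
    then show "x + y \<in> ?C"
      by (intro CollectI exI[of _ "\<lambda>p. l1 p + l2 p"]) (auto simp: scaleR_add_left sum.distrib)
  next
    fix x c assume "x \<in> ?C" "(0::real) \<le> c"
    then obtain l1 where "x = (\<Sum>p\<in>A. l1 p *\<^sub>R h p)" "\<forall>p\<in>A. 0 \<le> l1 p" by auto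
    then show "c *\<^sub>R x \<in> ?C" using \<open>0 \<le> c\<close>
      by (intro CollectI exI[of _ "\<lambda>p. c * l1 p"]) (auto simp: scaleR_sum_right)
  qed
  have "h q \<in> ?C" if q: "q \<in> A" for q
  proof -
    show "h q \<in> ?C"
      using q assms
      by (intro CollectI exI[of _ "\<lambda>p. if p = q then 1 else 0"])
         (auto simp: if_distrib[of "\<lambda>c. c *\<^sub>R _"] sum.delta cong: if_cong)
  qed
  then have "h ` A \<subseteq> ?C" by blast
  then show "convex_cone hull (h ` A) \<subseteq> ?C" using cc by (rule hull_minimal)
qed

lemma cone_sep:
  fixes h :: "'b \<Rightarrow> 'a::euclidean_space"
  assumes A: "finite A"
    and z: "z \<notin> {\<Sum>p\<in>A. l p *\<^sub>R h p | l. \<forall>p\<in>A. (0::real) \<le> l p}"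
  shows "\<exists>d. inner d z < 0 \<and> (\<forall>p\<in>A. inner d (h p) \<ge> 0)"
proof -
  let ?S = "convex_cone hull (h ` A)"
  have cl: "closed ?S"
    using A by (intro polyhedron_imp_closed polyhedron_convex_cone_hull) auto
  have cv: "convex ?S" by (simp add: convex_convex_cone_hull)
  have zS: "z \<notin> ?S" using z fcone_hull[OF A, of h] by simp
  obtain a b where ab: "inner a z < b" "\<forall>x\<in>?S. inner a x > b"
    using separating_hyperplane_closed_point[OF cv cl zS] by auto
  have b: "b < 0" using ab(2) convex_cone_hull_contains_0 by force
  have "inner a (h p) \<ge> 0" if p: "p \<in> A" for p
  proof (rule ccontr)
    assume neg: "\<not> ?thesis"
    define c where "c = b / inner a (h p)"
    have c: "c \<ge> 0" using b neg by (simp add: c_def divide_nonpos_neg)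
    have "c *\<^sub>R h p \<in> ?S" using p c by (intro convex_cone_hull_mul hull_inc) auto
    then have "inner a (c *\<^sub>R h p) > b" using ab by blast
    moreover have "inner a (c *\<^sub>R h p) = b" using neg by (simp add: c_def)
    ultimately show False by simp
  qed
  then show ?thesis using ab b by (intro exI[of _ a]) auto
qed



lemma ev_ex: "eventually P (at_right (0::real)) \<Longrightarrow> \<exists>t>0. P t"
  unfolding eventually_at_right_field by (metis field_lbound_gt_zero less_numeral_extra(1))

lemma ev_lt: "(c::real) > 0 \<Longrightarrow> eventually (\<lambda>t. t < c) (at_right 0)"
  unfolding eventually_at_right_field by auto

lemma eps_le:
  fixes x y K :: real
  assumes "\<And>e. 0 < e \<Longrightarrow> e \<le> 1 \<Longrightarrow> x \<le> y + e * K"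
  shows "x \<le> y"
proof (rule ccontr)
  assume "\<not> x \<le> y"
  then have xy: "x - y > 0" by simp
  define e where "e = min 1 ((x - y) / (2 * (\<bar>K\<bar> + 1)))"
  have e: "0 < e" "e \<le> 1" using xy by (auto simp: e_def)
  have "e * K \<le> e * \<bar>K\<bar>" using e by (simp add: mult_left_mono)
  also have "\<dots> \<le> (x - y) / (2 * (\<bar>K\<bar> + 1)) * \<bar>K\<bar>" by (rule mult_right_mono) (auto simp: e_def)
  also have "\<dots> < x - y"
  proof -
    have "(x - y) / (2 * (\<bar>K\<bar> + 1)) * \<bar>K\<bar> = (x - y) * (\<bar>K\<bar> / (2 * (\<bar>K\<bar> + 1)))" by simp
    also have "\<dots> < (x - y) * 1"
      using xy by (intro mult_strict_left_mono) (auto simp: field_simps)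
    finally show ?thesis by simp
  qed
  finally show False using assms[OF e] by simp
qed

lemma ratio_lt1: "(x::real) \<ge> 0 \<Longrightarrow> x / (2 * (x + 1)) < 1"
  by (subst divide_less_eq) auto

lemma feas_ev:
  fixes a y0 v1 v2 :: "'a::real_inner"
  assumes h1: "inner a y0 \<le> b" and h2: "inner a y0 = b \<Longrightarrow> inner a v1 \<le> 0"
    and h3: "inner a y0 = b \<Longrightarrow> inner a v1 = 0 \<Longrightarrow> inner a v2 \<le> 0"
  shows "eventually (\<lambda>t. inner a (y0 + t *\<^sub>R v1 + t\<^sup>2 *\<^sub>R v2) \<le> b) (at_right 0)"
proof -
  have eq: "inner a (y0 + t *\<^sub>R v1 + t\<^sup>2 *\<^sub>R v2) = inner a y0 + t * inner a v1 + t\<^sup>2 * inner a v2" for t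
    by (simp add: inner_add_right)
  show ?thesis
  proof (cases "inner a y0 < b")
    case True
    have "((\<lambda>t. inner a y0 + t * inner a v1 + t\<^sup>2 * inner a v2) \<longlongrightarrow>
            inner a y0 + 0 * inner a v1 + 0\<^sup>2 * inner a v2) (at_right 0)"
      by (intro tendsto_intros)
    then have "eventually (\<lambda>t. inner a y0 + t * inner a v1 + t\<^sup>2 * inner a v2 < b) (at_right 0)"
      using True by (intro order_tendstoD(2)) auto
    then show ?thesis by eventually_elim (simp add: eq)
  next
    case False
    then have eqb: "inner a y0 = b" using h1 by simp
    show ?thesis
    proof (cases "inner a v1 < 0")
      case True
      have "((\<lambda>t. inner a v1 + t * inner a v2) \<longlongrightarrow> inner a v1 + 0 * inner a v2) (at_right 0)"
        by (intro tendsto_intros)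
      then have "eventually (\<lambda>t. inner a v1 + t * inner a v2 < 0) (at_right 0)"
        using True by (intro order_tendstoD(2)) auto
      then show ?thesis using eventually_at_right_less[of "0::real"]
      proof eventually_elim
        case (elim t)
        then have "t * (inner a v1 + t * inner a v2) \<le> 0" by (simp add: mult_pos_neg less_imp_le)
        then show ?case by (simp add: eq eqb power2_eq_square algebra_simps)
      qed
    next
      case False
      then have "inner a v1 = 0" using h2 eqb by simp
      then have "inner a v2 \<le> 0" using h3 eqb by simp
      then show ?thesis using \<open>inner a v1 = 0\<close>
        by (intro always_eventually allI) (simp add: eq eqb mult_nonneg_nonpos)
    qed
  qed
qed

locale prob =
  fixes f :: "real^'n \<Rightarrow> real" and Df :: "real^'n \<Rightarrow> real^'n"
    and g :: "real^'n \<Rightarrow> real^'m" and Jg :: "real^'n \<Rightarrow> real^'n^'m"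
    and Hg :: "'m \<Rightarrow> real^'n \<Rightarrow> real^'n^'n"
    and \<Theta> :: "(real^'m) set" and xb :: "real^'n"
    and P :: "((real^'m) \<times> real) set"
    and \<delta>f L \<delta>g :: real and U :: "(real^'n) set" and \<kappa> :: real
  assumes finP: "finite P"
    and Theta: "\<Theta> = {y. \<forall>p\<in>P. inner (fst p) y \<le> snd p}"
    and feas: "g xb \<in> \<Theta>"
    and \<delta>f: "\<delta>f > 0"
    and fder: "\<forall>x\<in>ball xb \<delta>f. (f has_derivative (\<lambda>h. inner (Df x) h)) (at x)"
    and lip: "\<forall>x\<in>ball xb \<delta>f. \<forall>y\<in>ball xb \<delta>f. norm (Df x - Df y) \<le> L * dist x y"
    and \<delta>g: "\<delta>g > 0"
    and gder: "\<forall>x\<in>ball xb \<delta>g. (g has_derivative (\<lambda>h. Jg x *v h)) (at x)"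
    and Jgder: "\<forall>i. ((\<lambda>u. Jg u $ i) has_derivative (\<lambda>h. Hg i xb *v h)) (at xb)"
    and U: "open U" "xb \<in> U" and \<kappa>: "\<kappa> > 0"
    and mscq: "\<forall>x\<in>U. infdist x {x. g x \<in> \<Theta>} \<le> \<kappa> * infdist (g x) \<Theta>"
begin

definition "A = {p\<in>P. inner (fst p) (g xb) = snd p}"

lemma mscq_point:
  assumes c: "c \<in> U" and q: "q \<in> \<Theta>" and \<eta>: "\<eta> > 0"
  shows "\<exists>x. g x \<in> \<Theta> \<and> dist x c \<le> \<kappa> * dist (g c) q + \<eta>"
proof -
  let ?G = "{x. g x \<in> \<Theta>}"
  have ne: "?G \<noteq> {}" using feas by auto
  have "infdist c ?G \<le> \<kappa> * infdist (g c) \<Theta>" using mscq c by auto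
  also have "\<dots> \<le> \<kappa> * dist (g c) q" using \<kappa> infdist_le[OF q] by (intro mult_left_mono) auto
  finally have "infdist c ?G < \<kappa> * dist (g c) q + \<eta>" using \<eta> by simp
  then have "\<exists>x\<in>?G. dist c x < \<kappa> * dist (g c) q + \<eta>"
    unfolding infdist_notempty[OF ne]
    by (subst (asm) cINF_less_iff[OF ne]) (auto intro: bdd_belowI2[of _ 0])
  then show ?thesis by (auto simp: dist_commute intro: less_imp_le)
qed

lemma g_lin:
  assumes e: "e > 0"
  shows "\<exists>\<rho>>0. \<forall>h. norm h < \<rho> \<longrightarrow> norm (g (xb + h) - g xb - Jg xb *v h) \<le> e * norm h"
proof -
  have "(g has_derivative (\<lambda>h. Jg xb *v h)) (at xb)" using gder \<delta>g by auto
  then obtain \<rho> where "\<rho> > 0" "\<forall>y. norm (y - xb) < \<rho> \<longrightarrow> norm (g y - g xb - Jg xb *v (y - xb)) \<le> e * norm (y - xb)"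
    unfolding has_derivative_at_alt using e by blast
  then show ?thesis by (intro exI[of _ \<rho>]) (auto dest: spec[of _ "xb + _"])
qed

lemma tangent_lin:
  assumes v: "v \<in> tangent_cone {x. g x \<in> \<Theta>} xb" and p: "p \<in> A"
  shows "inner (fst p) (Jg xb *v v) \<le> 0"
proof -
  obtain t w where tw: "\<forall>k. t k > 0" "t \<longlonglongrightarrow> 0" "w \<longlonglongrightarrow> v" "\<forall>k. xb + t k *\<^sub>R w k \<in> {x. g x \<in> \<Theta>}"
    using v unfolding tangent_cone_def by blast
  define a where "a = fst p"
  have pP: "p \<in> P" and ab: "inner a (g xb) = snd p" using p by (auto simp: A_def a_def)
  have key: "inner a (Jg xb *v v) \<le> e * (norm a * norm v)" if e: "e > 0" for e
  proof -
    obtain \<rho> where \<rho>: "\<rho> > 0" "\<forall>h. norm h < \<rho> \<longrightarrow> norm (g (xb + h) - g xb - Jg xb *v h) \<le> e * norm h"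
      using g_lin[OF e] by blast
    have "(\<lambda>k. t k *\<^sub>R w k) \<longlonglongrightarrow> 0 *\<^sub>R v" using tw by (intro tendsto_intros)
    then have "eventually (\<lambda>k. norm (t k *\<^sub>R w k) < \<rho>) sequentially"
      using \<rho> by (intro order_tendstoD(2)[OF tendsto_norm_zero]) auto
    then have ev: "eventually (\<lambda>k. inner (a v* Jg xb) (w k) \<le> e * (norm a * norm (w k))) sequentially"
    proof eventually_elim
      case (elim k)
      let ?h = "t k *\<^sub>R w k"
      have r: "norm (g (xb + ?h) - g xb - Jg xb *v ?h) \<le> e * norm ?h" using \<rho> elim by blast
      have "inner a (g (xb + ?h)) \<le> snd p" using tw(4) pP unfolding Theta a_def by auto
      then have i1: "inner a (g (xb + ?h) - g xb) \<le> 0" using ab by (simp add: inner_diff_right)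
      have "inner a (Jg xb *v ?h) = inner a (g (xb + ?h) - g xb) - inner a (g (xb + ?h) - g xb - Jg xb *v ?h)"
        by (simp add: inner_diff_right)
      also have "\<dots> \<le> 0 + norm a * (e * norm ?h)"
        using i1 Cauchy_Schwarz_ineq2[of a "g (xb + ?h) - g xb - Jg xb *v ?h"] r
        by (smt (verit, best) mult_left_mono norm_ge_zero)
      finally have "t k * inner a (Jg xb *v w k) \<le> e * (norm a * (\<bar>t k\<bar> * norm (w k)))"
        by (simp add: matrix_vector_mult_scaleR mult_ac)
      then have "t k * inner a (Jg xb *v w k) \<le> t k * (e * (norm a * norm (w k)))"
        using tw(1) by (simp add: mult_ac abs_of_pos)
      then have "inner a (Jg xb *v w k) \<le> e * (norm a * norm (w k))"
        using tw(1) mult_left_le_imp_le by blast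
      then show ?case by (simp add: dot_lmul_matrix)
    qed
    have l1: "(\<lambda>k. inner (a v* Jg xb) (w k)) \<longlonglongrightarrow> inner (a v* Jg xb) v" using tw by (intro tendsto_intros)
    have l2: "(\<lambda>k. e * (norm a * norm (w k))) \<longlonglongrightarrow> e * (norm a * norm v)" using tw by (intro tendsto_intros)
    have "inner (a v* Jg xb) v \<le> e * (norm a * norm v)"
      using tendsto_le[OF trivial_limit_sequentially l2 l1 ev] .
    then show ?thesis by (simp add: dot_lmul_matrix)
  qed
  show ?thesis
  proof (rule ccontr)
    assume "\<not> ?thesis"
    then have pos: "inner a (Jg xb *v v) > 0" by (simp add: a_def)
    define e where "e = inner a (Jg xb *v v) / (2 * (norm a * norm v + 1))"
    have "norm a * norm v \<ge> 0" by simp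
    then have "2 * (norm a * norm v + 1) > 0" by (smt (verit))
    then have e: "e > 0" using pos unfolding e_def by (simp add: divide_pos_pos)
    have "e * (norm a * norm v) < inner a (Jg xb *v v)"
    proof -
      have "e * (norm a * norm v) = inner a (Jg xb *v v) * ((norm a * norm v) / (2 * (norm a * norm v + 1)))"
        by (simp add: e_def)
      also have "\<dots> < inner a (Jg xb *v v) * 1"
        using pos by (intro mult_strict_left_mono ratio_lt1) auto
      finally show ?thesis by simp
    qed
    then show False using key[OF e] by simp
  qed
qed

end


context prob begin

lemma feas_curve:
  assumes h2: "\<And>p. p \<in> A \<Longrightarrow> inner (fst p) v1 \<le> 0"
    and h3: "\<And>p. p \<in> A \<Longrightarrow> inner (fst p) v1 = 0 \<Longrightarrow> inner (fst p) v2 \<le> 0"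
  shows "eventually (\<lambda>t. g xb + t *\<^sub>R v1 + t\<^sup>2 *\<^sub>R v2 \<in> \<Theta>) (at_right 0)"
proof -
  have "\<forall>p\<in>P. eventually (\<lambda>t. inner (fst p) (g xb + t *\<^sub>R v1 + t\<^sup>2 *\<^sub>R v2) \<le> snd p) (at_right 0)"
  proof
    fix p assume p: "p \<in> P"
    show "eventually (\<lambda>t. inner (fst p) (g xb + t *\<^sub>R v1 + t\<^sup>2 *\<^sub>R v2) \<le> snd p) (at_right 0)"
      using feas p h2 h3 by (intro feas_ev) (auto simp: Theta A_def)
  qed
  from eventually_ball_finite[OF finP this] show ?thesis
    by eventually_elim (auto simp: Theta)
qed

lemma ev_U:
  assumes "((\<lambda>t. c t) \<longlongrightarrow> xb) (at_right 0)"
  shows "eventually (\<lambda>t. c t \<in> U) (at_right 0)"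
  using topological_tendstoD[OF assms U] .

lemma first_order:
  assumes d: "\<forall>p\<in>A. inner (fst p) (Jg xb *v d) \<le> 0"
    and grow: "\<exists>\<epsilon>>0. \<forall>x. g x \<in> \<Theta> \<and> dist x xb < \<epsilon> \<longrightarrow> f xb \<le> f x"
  shows "inner (Df xb) d \<ge> 0"
proof -
  obtain \<epsilon>m where \<epsilon>m: "\<epsilon>m > 0" "\<forall>x. g x \<in> \<Theta> \<and> dist x xb < \<epsilon>m \<longrightarrow> f xb \<le> f x"
    using grow by auto
  define M0 where "M0 = norm d + \<kappa> * norm d + 1"
  define K where "K = norm (Df xb) * (\<kappa> * norm d + 1) + \<bar>L\<bar> * M0\<^sup>2"
  have main: "0 \<le> inner (Df xb) d + e * K" if e: "0 < e" "e \<le> 1" for e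
  proof -
    obtain \<rho> where \<rho>: "\<rho> > 0" "\<forall>h. norm h < \<rho> \<longrightarrow> norm (g (xb + h) - g xb - Jg xb *v h) \<le> e * norm h"
      using g_lin[OF e(1)] by blast
    define M where "M = norm d + \<kappa> * e * norm d + e"
    have "\<kappa> * e * norm d \<le> \<kappa> * 1 * norm d" using e \<kappa> by (intro mult_right_mono mult_left_mono) auto
    then have k1: "\<kappa> * e * norm d \<le> \<kappa> * norm d" by simp
    have k2: "0 \<le> \<kappa> * e * norm d" using e \<kappa> by simp
    have M0a: "0 \<le> M" unfolding M_def using k1 k2 e by (smt (verit) norm_ge_zero)
    have M0b: "M \<le> M0" unfolding M_def M0_def using k1 k2 e by linarith
    note M0 = M0a M0b
    have ev1: "eventually (\<lambda>t. g xb + t *\<^sub>R (Jg xb *v d) + t\<^sup>2 *\<^sub>R 0 \<in> \<Theta>) (at_right 0)"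
      using d by (intro feas_curve) auto
    have ev2: "eventually (\<lambda>t. t * norm d < \<rho>) (at_right 0)"
    proof -
      have "((\<lambda>t. t * norm d) \<longlongrightarrow> 0 * norm d) (at_right 0)" by (intro tendsto_intros)
      then show ?thesis using \<rho> by (intro order_tendstoD(2)) auto
    qed
    have ev3: "eventually (\<lambda>t. xb + t *\<^sub>R d \<in> U) (at_right 0)"
    proof (rule ev_U)
      have "((\<lambda>t. xb + t *\<^sub>R d) \<longlongrightarrow> xb + 0 *\<^sub>R d) (at_right 0)" by (intro tendsto_intros)
      then show "((\<lambda>t. xb + t *\<^sub>R d) \<longlongrightarrow> xb) (at_right 0)" by simp
    qed
    have ev4: "eventually (\<lambda>t. t * M < min \<delta>f \<epsilon>m) (at_right 0)"
    proof -
      have "((\<lambda>t. t * M) \<longlongrightarrow> 0 * M) (at_right 0)" by (intro tendsto_intros)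
      then show ?thesis using \<delta>f \<epsilon>m by (intro order_tendstoD(2)) auto
    qed
    have ev5: "eventually (\<lambda>t. t < e) (at_right 0)" using e by (intro ev_lt) auto
    obtain t where t: "t > 0" "g xb + t *\<^sub>R (Jg xb *v d) \<in> \<Theta>" "t * norm d < \<rho>"
      "xb + t *\<^sub>R d \<in> U" "t * M < min \<delta>f \<epsilon>m" "t < e"
      using ev_ex[OF eventually_conj[OF ev1 eventually_conj[OF ev2 eventually_conj[OF ev3
            eventually_conj[OF ev4 ev5]]]]] by auto
    define c where "c = xb + t *\<^sub>R d"
    define q where "q = g xb + t *\<^sub>R (Jg xb *v d)"
    have gq: "dist (g c) q \<le> e * (t * norm d)"
    proof -
      have "norm (t *\<^sub>R d) < \<rho>" using t by simp
      then have "norm (g (xb + t *\<^sub>R d) - g xb - Jg xb *v (t *\<^sub>R d)) \<le> e * norm (t *\<^sub>R d)"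
        using \<rho> by blast
      then show ?thesis using t
        by (simp add: c_def q_def dist_norm matrix_vector_mult_scaleR algebra_simps)
    qed
    obtain x where x: "g x \<in> \<Theta>" "dist x c \<le> \<kappa> * dist (g c) q + e * t"
      using mscq_point[of c q "e * t"] t e by (auto simp: c_def q_def)
    have xc: "norm (x - c) \<le> t * (\<kappa> * e * norm d + e)"
    proof -
      have "norm (x - c) \<le> \<kappa> * (e * (t * norm d)) + e * t"
        using x gq \<kappa> by (smt (verit, best) dist_norm mult_left_mono)
      then show ?thesis by (simp add: algebra_simps)
    qed
    have xx: "norm (x - xb) \<le> t * M"
    proof -
      have "norm (x - xb) \<le> norm (x - c) + norm (t *\<^sub>R d)"
        using norm_triangle_ineq[of "x - c" "t *\<^sub>R d"] by (simp add: c_def algebra_simps)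
      then show ?thesis using xc t by (simp add: M_def algebra_simps)
    qed
    have f1: "f xb \<le> f x" using \<epsilon>m x xx t by (auto simp: dist_norm)
    have xin: "x \<in> ball xb \<delta>f" using xx t by (simp add: dist_norm norm_minus_commute)
    have f2: "f x \<le> f xb + inner (Df xb) (x - xb) + L * (norm (x - xb))\<^sup>2"
      using f_quad[OF fder lip xin, of xb] \<delta>f by auto
    have i1: "inner (Df xb) (x - xb) = t * inner (Df xb) d + inner (Df xb) (x - c)"
      by (simp add: c_def inner_diff_right inner_add_right algebra_simps)
    have i2: "inner (Df xb) (x - c) \<le> norm (Df xb) * (t * (\<kappa> * e * norm d + e))"
      using Cauchy_Schwarz_ineq2[of "Df xb" "x - c"] xc
      by (smt (verit, best) mult_left_mono norm_ge_zero)
    have i3: "L * (norm (x - xb))\<^sup>2 \<le> \<bar>L\<bar> * (t * M)\<^sup>2"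
    proof -
      have "L * (norm (x - xb))\<^sup>2 \<le> \<bar>L\<bar> * (norm (x - xb))\<^sup>2" by (simp add: mult_right_mono)
      also have "\<dots> \<le> \<bar>L\<bar> * (t * M)\<^sup>2" using xx by (intro mult_left_mono power_mono) auto
      finally show ?thesis .
    qed
    have "0 \<le> t * inner (Df xb) d + norm (Df xb) * (t * (\<kappa> * e * norm d + e)) + \<bar>L\<bar> * (t * M)\<^sup>2"
      using f1 f2 i1 i2 i3 by linarith
    then have "0 \<le> t * (inner (Df xb) d + norm (Df xb) * (\<kappa> * e * norm d + e) + \<bar>L\<bar> * t * M\<^sup>2)"
      by (simp add: algebra_simps power2_eq_square)
    then have A1: "0 \<le> inner (Df xb) d + norm (Df xb) * (\<kappa> * e * norm d + e) + \<bar>L\<bar> * t * M\<^sup>2"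
      using t(1) by (simp add: zero_le_mult_iff)
    have "\<bar>L\<bar> * t * M\<^sup>2 \<le> \<bar>L\<bar> * e * M0\<^sup>2"
    proof -
      have "t * M\<^sup>2 \<le> e * M0\<^sup>2" using t M0 e by (intro mult_mono power_mono) auto
      then show ?thesis by (simp add: mult_left_mono mult.assoc)
    qed
    moreover have "norm (Df xb) * (\<kappa> * e * norm d + e) = e * (norm (Df xb) * (\<kappa> * norm d + 1))"
      by (simp add: algebra_simps)
    ultimately show ?thesis using A1 unfolding K_def by (simp add: algebra_simps)
  qed
  have "- inner (Df xb) d \<le> 0"
  proof (rule eps_le[of _ _ K])
    fix e :: real assume "0 < e" "e \<le> 1"
    from main[OF this] show "- inner (Df xb) d \<le> 0 + e * K" by simp
  qed
  then show ?thesis by simp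
qed

end


lemma mv_nth: "((M::real^'a^'b) *v x) $ j = inner (M $ j) x"
  by (simp add: matrix_vector_mult_def inner_vec_def mult.commute)

context prob begin

definition "Qv v = (\<chi> j. inner (Hg j xb *v v) v)"

lemma f_line_deriv:
  assumes "y + s *\<^sub>R w \<in> ball xb \<delta>f"
  shows "((\<lambda>s. f (y + s *\<^sub>R w)) has_real_derivative inner (Df (y + s *\<^sub>R w)) w) (at s)"
proof -
  have "((\<lambda>s. f (y + s *\<^sub>R w)) has_derivative (\<lambda>h. inner (Df (y + s *\<^sub>R w)) (h *\<^sub>R w))) (at s)"
    apply (rule has_derivative_compose[where f="\<lambda>s. y + s *\<^sub>R w", unfolded o_def])
    apply (auto intro!: derivative_eq_intros)[1]
    using fder assms by auto
  moreover have "(\<lambda>h. inner (Df (y + s *\<^sub>R w)) (h *\<^sub>R w)) = (*) (inner (Df (y + s *\<^sub>R w)) w)"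
    by (auto simp: fun_eq_iff)
  ultimately show ?thesis by (simp add: has_field_derivative_def)
qed

lemma regnormal_bound:
  assumes zn: "(z, v) \<in> regular_normal_cone {(x, Df x) | x. True} (xb, Df xb)"
    and Dv: "inner (Df xb) v = 0" and e: "e > 0"
  shows "\<exists>\<eta>>0. \<forall>s. 0 \<le> s \<and> s < \<eta> \<longrightarrow> inner (Df (xb + s *\<^sub>R v)) v \<le> s * (- inner z v + e)"
proof -
  define K where "K = (1 + \<bar>L\<bar>) * norm v + 1"
  have K: "K > 0" by (simp add: K_def add_nonneg_pos)
  define e' where "e' = e / K"
  have e': "e' > 0" using e K by (simp add: e'_def)
  obtain \<delta> where \<delta>: "\<delta> > 0" "\<forall>w\<in>{(x, Df x) | x. True}. norm (w - (xb, Df xb)) < \<delta> \<longrightarrow>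
        inner (z, v) (w - (xb, Df xb)) \<le> e' * norm (w - (xb, Df xb))"
    using zn e' unfolding regular_normal_cone_def by blast
  define \<eta> where "\<eta> = min (\<delta>f / (norm v + 1)) (\<delta> / K)"
  have \<eta>: "\<eta> > 0" using \<delta>f \<delta> K by (simp add: \<eta>_def add_nonneg_pos)
  have "inner (Df (xb + s *\<^sub>R v)) v \<le> s * (- inner z v + e)" if s: "0 \<le> s" "s < \<eta>" for s
  proof -
    define x where "x = xb + s *\<^sub>R v"
    have "s * norm v \<le> s * (norm v + 1)" using s by (simp add: mult_left_mono)
    also have "\<dots> < \<delta>f" using s \<eta> by (simp add: \<eta>_def pos_less_divide_eq add_nonneg_pos)
    finally have xin: "x \<in> ball xb \<delta>f" using s by (simp add: x_def dist_norm)
    have "norm (Df x - Df xb) \<le> L * dist x xb" using lip xin \<delta>f by auto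
    also have "\<dots> \<le> \<bar>L\<bar> * (s * norm v)" using s by (simp add: x_def dist_norm mult_right_mono)
    finally have dfb: "norm (Df x - Df xb) \<le> \<bar>L\<bar> * (s * norm v)" .
    have nb: "norm ((x, Df x) - (xb, Df xb)) \<le> s * ((1 + \<bar>L\<bar>) * norm v)"
    proof -
      have "norm ((x, Df x) - (xb, Df xb)) = norm (x - xb, Df x - Df xb)" by simp
      also have "\<dots> \<le> norm (x - xb) + norm (Df x - Df xb)" by (rule norm_Pair_le)
      also have "\<dots> \<le> s * norm v + \<bar>L\<bar> * (s * norm v)" using dfb s by (simp add: x_def)
      finally show ?thesis by (simp add: algebra_simps)
    qed
    have "s * ((1 + \<bar>L\<bar>) * norm v) \<le> s * K" using s by (intro mult_left_mono) (auto simp: K_def)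
    also have "\<dots> < \<delta>" using s \<eta> K by (simp add: \<eta>_def pos_less_divide_eq mult.commute)
    finally have "norm ((x, Df x) - (xb, Df xb)) < \<delta>" using nb by linarith
    then have "inner (z, v) ((x, Df x) - (xb, Df xb)) \<le> e' * norm ((x, Df x) - (xb, Df xb))"
      using \<delta> by blast
    also have "\<dots> \<le> e' * (s * K)"
      using nb e' \<open>s * ((1 + \<bar>L\<bar>) * norm v) \<le> s * K\<close> by (intro mult_left_mono) auto
    also have "\<dots> = s * e" using K by (simp add: e'_def)
    finally have "s * inner z v + inner v (Df x) - inner v (Df xb) \<le> s * e"
      by (simp add: x_def inner_diff_right inner_add_right)
    then show ?thesis using Dv by (simp add: x_def[symmetric] inner_commute algebra_simps)
  qed
  then show ?thesis using \<eta> by blast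
qed

lemma f_upper_line:
  assumes zn: "(z, v) \<in> regular_normal_cone {(x, Df x) | x. True} (xb, Df xb)"
    and Dv: "inner (Df xb) v = 0" and e: "e > 0"
  shows "eventually (\<lambda>t. f (xb + t *\<^sub>R v) \<le> f xb + t\<^sup>2 / 2 * (- inner z v + e)) (at_right 0)"
proof -
  obtain \<eta> where \<eta>: "\<eta> > 0" "\<forall>s. 0 \<le> s \<and> s < \<eta> \<longrightarrow> inner (Df (xb + s *\<^sub>R v)) v \<le> s * (- inner z v + e)"
    using regnormal_bound[OF zn Dv e] by blast
  define \<eta>' where "\<eta>' = min \<eta> (\<delta>f / (norm v + 1))"
  have \<eta>': "\<eta>' > 0" using \<eta> \<delta>f by (simp add: \<eta>'_def add_nonneg_pos)
  have "f (xb + t *\<^sub>R v) \<le> f xb + t\<^sup>2 / 2 * (- inner z v + e)" if t: "0 < t" "t < \<eta>'" for t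
  proof -
    have inb: "xb + s *\<^sub>R v \<in> ball xb \<delta>f" if "0 \<le> s" "s \<le> t" for s
    proof -
      have "s * norm v \<le> s * (norm v + 1)" using that by (simp add: mult_left_mono)
      also have "\<dots> \<le> t * (norm v + 1)" using that by (intro mult_right_mono) auto
      also have "\<dots> < \<delta>f" using that t by (simp add: \<eta>'_def pos_less_divide_eq add_nonneg_pos)
      finally show ?thesis using that by (simp add: dist_norm)
    qed
    have "f (xb + t *\<^sub>R v) \<le> f (xb + 0 *\<^sub>R v) + t\<^sup>2 / 2 * (- inner z v + e)"
      by (rule upper_quad[where \<phi>d="\<lambda>s. inner (Df (xb + s *\<^sub>R v)) v"])
         (use inb f_line_deriv \<eta> t in \<open>auto simp: \<eta>'_def\<close>)
    then show ?thesis by simp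
  qed
  then show ?thesis unfolding eventually_at_right_field using \<eta>' by auto
qed

end


context prob begin

lemma g_taylor:
  assumes e: "e > 0"
  shows "eventually (\<lambda>t. \<forall>j. \<bar>g (xb + t *\<^sub>R v + (t\<^sup>2/2) *\<^sub>R u) $ j
            - (g xb + t *\<^sub>R (Jg xb *v v) + (t\<^sup>2/2) *\<^sub>R (Jg xb *v u + Qv v)) $ j\<bar> \<le> e * t\<^sup>2) (at_right 0)"
proof (rule eventually_all_finite)
  fix j
  define c where "c t = xb + t *\<^sub>R v + (t\<^sup>2/2) *\<^sub>R u" for t
  define \<phi> where "\<phi> t = g (c t) $ j" for t
  define \<phi>1 where "\<phi>1 t = inner (Jg (c t) $ j) (v + t *\<^sub>R u)" for t
  define a2 where "a2 = inner (Jg xb $ j) u + inner (Hg j xb *v v) v"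
  define \<rho> where "\<rho> = min 1 (\<delta>g / (norm v + norm u + 1))"
  have \<rho>: "\<rho> > 0" using \<delta>g by (simp add: \<rho>_def add_nonneg_pos)
  have cin: "c t \<in> ball xb \<delta>g" if t: "0 \<le> t" "t < \<rho>" for t
  proof -
    have "norm (c t - xb) \<le> norm (t *\<^sub>R v) + norm ((t\<^sup>2/2) *\<^sub>R u)"
      unfolding c_def using norm_triangle_ineq[of "t *\<^sub>R v" "(t\<^sup>2/2) *\<^sub>R u"] by simp
    also have "\<dots> = t * norm v + t\<^sup>2/2 * norm u" using t by simp
    also have "\<dots> \<le> t * norm v + t * norm u"
    proof -
      have "t < 1" using t by (simp add: \<rho>_def)
      then have "t * t \<le> t * 2" using t by (intro mult_left_mono) auto
      then have "t\<^sup>2/2 \<le> t" by (simp add: power2_eq_square)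
      then have "t\<^sup>2/2 * norm u \<le> t * norm u" by (rule mult_right_mono) simp
      then show ?thesis by linarith
    qed
    also have "\<dots> \<le> t * (norm v + norm u + 1)" using t by (simp add: algebra_simps)
    also have "\<dots> < \<delta>g" using t by (simp add: \<rho>_def pos_less_divide_eq add_nonneg_pos mult.commute)
    finally show ?thesis by (simp add: dist_norm norm_minus_commute)
  qed
  have cder: "(c has_derivative (\<lambda>s. s *\<^sub>R (v + t *\<^sub>R u))) (at t)" for t
    unfolding c_def
    by (auto intro!: derivative_eq_intros simp: fun_eq_iff algebra_simps power2_eq_square)
  have D1: "(\<phi> has_real_derivative \<phi>1 t) (at t)" if t: "0 \<le> t" "t < \<rho>" for t
  proof -
    have gd: "(g has_derivative (\<lambda>h. Jg (c t) *v h)) (at (c t))" using gder cin[OF t] by auto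
    have "((\<lambda>t. g (c t)) has_derivative (\<lambda>s. Jg (c t) *v (s *\<^sub>R (v + t *\<^sub>R u)))) (at t)"
      using has_derivative_compose[OF cder gd] by (simp add: o_def)
    then have "(\<phi> has_derivative (\<lambda>s. (Jg (c t) *v (s *\<^sub>R (v + t *\<^sub>R u))) $ j)) (at t)"
      unfolding \<phi>_def by (rule bounded_linear.has_derivative[OF bounded_linear_vec_nth])
    moreover have "(\<lambda>s. (Jg (c t) *v (s *\<^sub>R (v + t *\<^sub>R u))) $ j) = (*) (\<phi>1 t)"
      by (auto simp: fun_eq_iff \<phi>1_def mv_nth)
    ultimately show ?thesis by (simp add: has_field_derivative_def)
  qed
  have D2: "(\<phi>1 has_real_derivative a2) (at 0)"
  proof -
    have c0: "c 0 = xb" by (simp add: c_def)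
    have J0: "((\<lambda>x. Jg x $ j) has_derivative (\<lambda>h. Hg j xb *v h)) (at (c 0))" using Jgder c0 by simp
    have h1: "((\<lambda>t. Jg (c t) $ j) has_derivative (\<lambda>s. Hg j xb *v (s *\<^sub>R (v + 0 *\<^sub>R u)))) (at 0)"
      using has_derivative_compose[OF cder J0] by (simp add: o_def)
    have h2: "((\<lambda>t. v + t *\<^sub>R u) has_derivative (\<lambda>s. s *\<^sub>R u)) (at 0)"
      by (auto intro!: derivative_eq_intros)
    have "(\<phi>1 has_derivative (\<lambda>h. inner (Jg (c 0) $ j) (h *\<^sub>R u) + inner (Hg j xb *v (h *\<^sub>R (v + 0 *\<^sub>R u))) (v + 0 *\<^sub>R u))) (at 0)"
      unfolding \<phi>1_def by (rule has_derivative_inner[OF h1 h2])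
    moreover have "(\<lambda>h. inner (Jg (c 0) $ j) (h *\<^sub>R u) + inner (Hg j xb *v (h *\<^sub>R (v + 0 *\<^sub>R u))) (v + 0 *\<^sub>R u)) = (*) a2"
      by (auto simp: fun_eq_iff a2_def c0 matrix_vector_mult_scaleR algebra_simps)
    ultimately show ?thesis by (simp add: has_field_derivative_def)
  qed
  obtain \<eta> where \<eta>: "\<eta> > 0" "\<forall>t. 0 < t \<and> t < \<eta> \<longrightarrow> \<bar>\<phi> t - \<phi> 0 - t * \<phi>1 0 - t\<^sup>2 / 2 * a2\<bar> \<le> e * t\<^sup>2"
    using peano2[of \<rho> \<phi> \<phi>1 a2 e, OF \<rho> D1 D2 e] by blast
  have eq: "(g xb + t *\<^sub>R (Jg xb *v v) + (t\<^sup>2/2) *\<^sub>R (Jg xb *v u + Qv v)) $ j = \<phi> 0 + t * \<phi>1 0 + t\<^sup>2 / 2 * a2" for t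
    by (simp add: \<phi>_def \<phi>1_def a2_def c_def Qv_def mv_nth algebra_simps)
  show "eventually (\<lambda>t. \<bar>g (xb + t *\<^sub>R v + (t\<^sup>2/2) *\<^sub>R u) $ j
            - (g xb + t *\<^sub>R (Jg xb *v v) + (t\<^sup>2/2) *\<^sub>R (Jg xb *v u + Qv v)) $ j\<bar> \<le> e * t\<^sup>2) (at_right 0)"
    unfolding eventually_at_right_field
  proof (intro exI[of _ \<eta>] conjI allI impI)
    fix t :: real assume t: "0 < t" "t < \<eta>"
    have "g (xb + t *\<^sub>R v + (t\<^sup>2/2) *\<^sub>R u) $ j
            - (g xb + t *\<^sub>R (Jg xb *v v) + (t\<^sup>2/2) *\<^sub>R (Jg xb *v u + Qv v)) $ j
          = \<phi> t - \<phi> 0 - t * \<phi>1 0 - t\<^sup>2 / 2 * a2"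
      unfolding eq by (simp add: \<phi>_def c_def)
    then show "\<bar>g (xb + t *\<^sub>R v + (t\<^sup>2/2) *\<^sub>R u) $ j
            - (g xb + t *\<^sub>R (Jg xb *v v) + (t\<^sup>2/2) *\<^sub>R (Jg xb *v u + Qv v)) $ j\<bar> \<le> e * t\<^sup>2"
      using \<eta>(2) t by simp
  qed (use \<eta> in auto)
qed

end


context prob begin

lemma second_order_core:
  assumes v1: "\<forall>p\<in>A. inner (fst p) (Jg xb *v v) \<le> 0"
    and u1: "\<forall>p\<in>A. inner (fst p) (Jg xb *v v) = 0 \<longrightarrow> inner (fst p) (Jg xb *v u + Qv v) \<le> 0"
    and Dv: "inner (Df xb) v = 0"
    and zn: "(z, v) \<in> regular_normal_cone {(x, Df x) | x. True} (xb, Df xb)"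
    and \<sigma>: "\<sigma> \<ge> 0"
    and grow: "\<exists>\<epsilon>>0. \<forall>x. g x \<in> \<Theta> \<and> dist x xb < \<epsilon> \<longrightarrow> f x \<ge> f xb + \<sigma> / 2 * (norm (x - xb))\<^sup>2"
  shows "\<sigma> * (norm v)\<^sup>2 \<le> - inner z v + inner (Df xb) u"
proof -
  obtain \<epsilon>m where \<epsilon>m: "\<epsilon>m > 0" "\<forall>x. g x \<in> \<Theta> \<and> dist x xb < \<epsilon>m \<longrightarrow> f x \<ge> f xb + \<sigma> / 2 * (norm (x - xb))\<^sup>2"
    using grow by auto
  define K1 where "K1 = \<kappa> * real CARD('m) + 1"
  have K1: "K1 \<ge> 1" using \<kappa> by (simp add: K1_def)
  define M where "M = norm u + K1"
  have M: "M \<ge> 0" using K1 by (simp add: M_def)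
  define Cst where "Cst = 1 + 2 * norm (Df xb) * K1 + 2 * \<sigma> * norm v * M + 2 * \<bar>L\<bar> * norm v * M + 2 * \<bar>L\<bar> * M\<^sup>2"
  have main: "\<sigma> * (norm v)\<^sup>2 \<le> - inner z v + inner (Df xb) u + e * Cst" if e: "0 < e" "e \<le> 1" for e
  proof -
    define v2 where "v2 = (1/2) *\<^sub>R (Jg xb *v u + Qv v)"
    have ev1: "eventually (\<lambda>t. g xb + t *\<^sub>R (Jg xb *v v) + t\<^sup>2 *\<^sub>R v2 \<in> \<Theta>) (at_right 0)"
    proof (rule feas_curve)
      fix p assume p: "p \<in> A"
      show "inner (fst p) (Jg xb *v v) \<le> 0" using v1 p by blast
      assume "inner (fst p) (Jg xb *v v) = 0"
      then have "inner (fst p) (Jg xb *v u + Qv v) \<le> 0" using u1 p by blast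
      then show "inner (fst p) v2 \<le> 0" unfolding v2_def inner_scaleR_right by simp
    qed
    have ev2: "eventually (\<lambda>t. \<forall>j. \<bar>g (xb + t *\<^sub>R v + (t\<^sup>2/2) *\<^sub>R u) $ j
            - (g xb + t *\<^sub>R (Jg xb *v v) + (t\<^sup>2/2) *\<^sub>R (Jg xb *v u + Qv v)) $ j\<bar> \<le> e * t\<^sup>2) (at_right 0)"
      using g_taylor[OF e(1)] .
    have ev3: "eventually (\<lambda>t. xb + t *\<^sub>R v + (t\<^sup>2/2) *\<^sub>R u \<in> U) (at_right 0)"
    proof (rule ev_U)
      have "((\<lambda>t. xb + t *\<^sub>R v + (t\<^sup>2/2) *\<^sub>R u) \<longlongrightarrow> xb + 0 *\<^sub>R v + (0\<^sup>2/2) *\<^sub>R u) (at_right 0)"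
        by (intro tendsto_intros) auto
      then show "((\<lambda>t. xb + t *\<^sub>R v + (t\<^sup>2/2) *\<^sub>R u) \<longlongrightarrow> xb) (at_right 0)" by simp
    qed
    have ev4: "eventually (\<lambda>t. f (xb + t *\<^sub>R v) \<le> f xb + t\<^sup>2 / 2 * (- inner z v + e)) (at_right 0)"
      using f_upper_line[OF zn Dv e(1)] .
    have ev5: "eventually (\<lambda>t. t < e) (at_right 0)" using e by (intro ev_lt) auto
    have ev6: "eventually (\<lambda>t. t * (norm v + M) < min \<delta>f \<epsilon>m) (at_right 0)"
    proof -
      have "((\<lambda>t. t * (norm v + M)) \<longlongrightarrow> 0 * (norm v + M)) (at_right 0)" by (intro tendsto_intros)
      then show ?thesis using \<delta>f \<epsilon>m by (intro order_tendstoD(2)) auto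
    qed
    obtain t where t: "t > 0" "g xb + t *\<^sub>R (Jg xb *v v) + t\<^sup>2 *\<^sub>R v2 \<in> \<Theta>"
      "\<forall>j. \<bar>g (xb + t *\<^sub>R v + (t\<^sup>2/2) *\<^sub>R u) $ j
            - (g xb + t *\<^sub>R (Jg xb *v v) + (t\<^sup>2/2) *\<^sub>R (Jg xb *v u + Qv v)) $ j\<bar> \<le> e * t\<^sup>2"
      "xb + t *\<^sub>R v + (t\<^sup>2/2) *\<^sub>R u \<in> U"
      "f (xb + t *\<^sub>R v) \<le> f xb + t\<^sup>2 / 2 * (- inner z v + e)"
      "t < e" "t * (norm v + M) < min \<delta>f \<epsilon>m"
      using ev_ex[OF eventually_conj[OF ev1 eventually_conj[OF ev2 eventually_conj[OF ev3
            eventually_conj[OF ev4 eventually_conj[OF ev5 ev6]]]]]] by auto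
    have t1: "t < 1" using t e by simp
    define c where "c = xb + t *\<^sub>R v + (t\<^sup>2/2) *\<^sub>R u"
    define q where "q = g xb + t *\<^sub>R (Jg xb *v v) + (t\<^sup>2/2) *\<^sub>R (Jg xb *v u + Qv v)"
    have qT: "q \<in> \<Theta>" using t(2) by (simp add: q_def v2_def)
    have gq: "dist (g c) q \<le> real CARD('m) * (e * t\<^sup>2)"
    proof -
      have "dist (g c) q = norm (g c - q)" by (simp add: dist_norm)
      also have "\<dots> \<le> (\<Sum>j\<in>UNIV. \<bar>(g c - q) $ j\<bar>)" by (rule norm_le_l1_cart)
      also have "\<dots> \<le> (\<Sum>j\<in>(UNIV::'m set). e * t\<^sup>2)"
        by (rule sum_mono) (use t(3) in \<open>simp add: c_def q_def\<close>)
      finally show ?thesis by simp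
    qed
    obtain x where x: "g x \<in> \<Theta>" "dist x c \<le> \<kappa> * dist (g c) q + e * t\<^sup>2"
      using mscq_point[of c q "e * t\<^sup>2"] t e qT by (auto simp: c_def)
    have xc: "norm (x - c) \<le> K1 * e * t\<^sup>2"
    proof -
      have "\<kappa> * dist (g c) q \<le> \<kappa> * (real CARD('m) * (e * t\<^sup>2))"
        using gq \<kappa> by (intro mult_left_mono) auto
      then show ?thesis using x by (simp add: K1_def dist_norm algebra_simps)
    qed
    define r where "r = x - xb - t *\<^sub>R v"
    have rc: "r = (x - c) + (t\<^sup>2/2) *\<^sub>R u" by (simp add: r_def c_def algebra_simps)
    have tt: "t\<^sup>2 \<le> t" using t t1 by (simp add: power2_eq_square mult_left_le)
    have rb: "norm r \<le> t\<^sup>2 * M"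
    proof -
      have "norm r \<le> norm (x - c) + t\<^sup>2/2 * norm u"
        using norm_triangle_ineq[of "x - c" "(t\<^sup>2/2) *\<^sub>R u"] by (simp add: rc)
      also have "\<dots> \<le> K1 * 1 * t\<^sup>2 + t\<^sup>2 * norm u"
      proof -
        have "K1 * e * t\<^sup>2 \<le> K1 * 1 * t\<^sup>2" using e K1 by (intro mult_right_mono mult_left_mono) auto
        moreover have "t\<^sup>2/2 * norm u \<le> t\<^sup>2 * norm u" by (simp add: mult_right_mono)
        ultimately show ?thesis using xc by linarith
      qed
      finally show ?thesis by (simp add: M_def algebra_simps)
    qed
    have xx: "norm (x - xb) \<le> t * (norm v + M)"
    proof -
      have "x - xb = t *\<^sub>R v + r" by (simp add: r_def)
      then have "norm (x - xb) \<le> t * norm v + norm r"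
        using norm_triangle_ineq[of "t *\<^sub>R v" r] t by simp
      also have "\<dots> \<le> t * norm v + t * M" using rb tt M by (smt (verit) mult_right_mono)
      finally show ?thesis by (simp add: algebra_simps)
    qed
    have xin: "x \<in> ball xb \<delta>f" using xx t by (simp add: dist_norm norm_minus_commute)
    have yin: "xb + t *\<^sub>R v \<in> ball xb \<delta>f"
    proof -
      have "t * norm v \<le> t * (norm v + M)" using t M by (simp add: mult_left_mono)
      then have "t * norm v < \<delta>f" using t(7) by linarith
      then show ?thesis using t by (simp add: dist_norm)
    qed
    have fg: "f x \<ge> f xb + \<sigma> / 2 * (norm (x - xb))\<^sup>2" using \<epsilon>m x xx t by (auto simp: dist_norm)
    have fq: "f x \<le> f (xb + t *\<^sub>R v) + inner (Df (xb + t *\<^sub>R v)) r + L * (norm r)\<^sup>2"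
      using f_quad[OF fder lip xin yin] by (simp add: r_def algebra_simps)
    have Dlip: "norm (Df (xb + t *\<^sub>R v) - Df xb) \<le> \<bar>L\<bar> * (t * norm v)"
    proof -
      have "norm (Df (xb + t *\<^sub>R v) - Df xb) \<le> L * dist (xb + t *\<^sub>R v) xb" using lip yin \<delta>f by auto
      also have "\<dots> \<le> \<bar>L\<bar> * (t * norm v)" using t by (simp add: dist_norm mult_right_mono)
      finally show ?thesis .
    qed
    have i1: "inner (Df (xb + t *\<^sub>R v)) r \<le> inner (Df xb) r + \<bar>L\<bar> * (t * norm v) * norm r"
    proof -
      have "inner (Df (xb + t *\<^sub>R v) - Df xb) r \<le> norm (Df (xb + t *\<^sub>R v) - Df xb) * norm r"
        by (rule norm_cauchy_schwarz)
      also have "\<dots> \<le> \<bar>L\<bar> * (t * norm v) * norm r" using Dlip by (simp add: mult_right_mono)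
      finally show ?thesis by (simp add: inner_diff_left)
    qed
    have i2: "inner (Df xb) r \<le> norm (Df xb) * (K1 * e * t\<^sup>2) + t\<^sup>2/2 * inner (Df xb) u"
    proof -
      have "inner (Df xb) (x - c) \<le> norm (Df xb) * norm (x - c)" by (rule norm_cauchy_schwarz)
      also have "\<dots> \<le> norm (Df xb) * (K1 * e * t\<^sup>2)" using xc by (simp add: mult_left_mono)
      finally show ?thesis by (simp add: rc inner_add_right)
    qed
    have i3: "L * (norm r)\<^sup>2 \<le> \<bar>L\<bar> * (t\<^sup>2 * M)\<^sup>2"
    proof -
      have "L * (norm r)\<^sup>2 \<le> \<bar>L\<bar> * (norm r)\<^sup>2" by (simp add: mult_right_mono)
      also have "\<dots> \<le> \<bar>L\<bar> * (t\<^sup>2 * M)\<^sup>2" using rb by (intro mult_left_mono power_mono) auto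
      finally show ?thesis .
    qed
    have i4: "(norm (x - xb))\<^sup>2 \<ge> t\<^sup>2 * (norm v)\<^sup>2 - 2 * t * norm v * norm r"
    proof -
      have "x - xb = t *\<^sub>R v + r" by (simp add: r_def)
      have "(norm (t *\<^sub>R v + r))\<^sup>2 = inner (t *\<^sub>R v + r) (t *\<^sub>R v + r)" by (simp add: power2_norm_eq_inner)
      also have "\<dots> = t\<^sup>2 * inner v v + 2 * t * inner v r + inner r r"
        by (simp add: inner_add_left inner_add_right inner_commute[of r v] power2_eq_square algebra_simps)
      also have "\<dots> = t\<^sup>2 * (norm v)\<^sup>2 + 2 * t * inner v r + (norm r)\<^sup>2" by (simp add: power2_norm_eq_inner)
      finally have "(norm (x - xb))\<^sup>2 = t\<^sup>2 * (norm v)\<^sup>2 + 2 * t * inner v r + (norm r)\<^sup>2"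
        using \<open>x - xb = t *\<^sub>R v + r\<close> by simp
      moreover have "- (norm v * norm r) \<le> inner v r"
        using Cauchy_Schwarz_ineq2[of v "- r"] by simp
      then have "- (t * (norm v * norm r)) \<le> t * inner v r" using t
        by (metis mult_left_mono less_imp_le mult_minus_right)
      ultimately show ?thesis by (simp add: algebra_simps)
    qed
    have s1: "\<sigma> / 2 * (t\<^sup>2 * (norm v)\<^sup>2 - 2 * t * norm v * norm r) \<le> \<sigma> / 2 * (norm (x - xb))\<^sup>2"
      using i4 \<sigma> by (intro mult_left_mono) auto
    have b1: "t * norm v * norm r \<le> t\<^sup>2 * (e * (norm v * M))"
    proof -
      have "t * norm v * norm r \<le> t * norm v * (t\<^sup>2 * M)" using rb t by (intro mult_left_mono) auto
      also have "\<dots> = t\<^sup>2 * (t * (norm v * M))" by (simp add: algebra_simps)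
      also have "\<dots> \<le> t\<^sup>2 * (e * (norm v * M))" using t M by (intro mult_left_mono mult_right_mono) auto
      finally show ?thesis .
    qed
    have b2: "\<bar>L\<bar> * (t\<^sup>2 * M)\<^sup>2 \<le> t\<^sup>2 * (e * (\<bar>L\<bar> * M\<^sup>2))"
    proof -
      have "\<bar>L\<bar> * (t\<^sup>2 * M)\<^sup>2 = t\<^sup>2 * (t\<^sup>2 * (\<bar>L\<bar> * M\<^sup>2))" by (simp add: power2_eq_square algebra_simps)
      also have "\<dots> \<le> t\<^sup>2 * (e * (\<bar>L\<bar> * M\<^sup>2))" using tt t by (intro mult_left_mono mult_right_mono) auto
      finally show ?thesis .
    qed
    have b3: "\<bar>L\<bar> * (t * norm v) * norm r \<le> \<bar>L\<bar> * (t\<^sup>2 * (e * (norm v * M)))"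
      using b1 by (simp add: mult_left_mono mult.assoc)
    have b4: "\<sigma> / 2 * (2 * t * norm v * norm r) \<le> \<sigma> * (t\<^sup>2 * (e * (norm v * M)))"
      using b1 \<sigma> by (simp add: mult_left_mono mult.assoc)
    have big: "\<sigma> / 2 * (t\<^sup>2 * (norm v)\<^sup>2) \<le> t\<^sup>2 / 2 * (- inner z v + e) + norm (Df xb) * (K1 * e * t\<^sup>2)
        + t\<^sup>2/2 * inner (Df xb) u + \<bar>L\<bar> * (t\<^sup>2 * (e * (norm v * M))) + t\<^sup>2 * (e * (\<bar>L\<bar> * M\<^sup>2))
        + \<sigma> * (t\<^sup>2 * (e * (norm v * M)))"
      using s1 fg fq t(5) i1 i2 i3 b2 b3 b4 by (simp add: right_diff_distrib)
    have eq1: "2 * (\<sigma> / 2 * (t\<^sup>2 * (norm v)\<^sup>2)) = t\<^sup>2 * (\<sigma> * (norm v)\<^sup>2)" by simp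
    have eq2: "2 * (t\<^sup>2 / 2 * (- inner z v + e) + norm (Df xb) * (K1 * e * t\<^sup>2)
        + t\<^sup>2/2 * inner (Df xb) u + \<bar>L\<bar> * (t\<^sup>2 * (e * (norm v * M))) + t\<^sup>2 * (e * (\<bar>L\<bar> * M\<^sup>2))
        + \<sigma> * (t\<^sup>2 * (e * (norm v * M)))) = t\<^sup>2 * (- inner z v + inner (Df xb) u + e * Cst)"
      by (simp add: Cst_def algebra_simps power2_eq_square add_divide_distrib diff_divide_distrib)
    from big have "t\<^sup>2 * (\<sigma> * (norm v)\<^sup>2) \<le> t\<^sup>2 * (- inner z v + inner (Df xb) u + e * Cst)"
      unfolding eq1[symmetric] eq2[symmetric] by (rule mult_left_mono) auto
    then show ?thesis using t by (simp add: mult_le_cancel_left_pos)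
  qed
  show ?thesis
  proof (rule eps_le[of _ _ Cst])
    fix e :: real assume "0 < e" "e \<le> 1"
    from main[OF this] show "\<sigma> * (norm v)\<^sup>2 \<le> - inner z v + inner (Df xb) u + e * Cst" .
  qed
qed

end


lemma mv_sum:
  assumes "finite S"
  shows "(M::real^'n^'m) *v (\<Sum>p\<in>S. l p *\<^sub>R w p) = (\<Sum>p\<in>S. l p *\<^sub>R (M *v w p))"
  using assms by (induction S rule: finite_induct)
    (auto simp: matrix_vector_right_distrib matrix_vector_mult_scaleR)

lemma scaleR_mv: "((c::real) *\<^sub>R (M::real^'n^'m)) *v x = c *\<^sub>R (M *v x)"
  by (simp add: vec_eq_iff matrix_vector_mult_def sum_distrib_left mult.assoc)

lemma mat_sum_mv:
  assumes "finite S"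
  shows "(\<Sum>i\<in>S. c i *\<^sub>R (H i :: real^'n^'m)) *v x = (\<Sum>i\<in>S. c i *\<^sub>R (H i *v x))"
  using assms by (induction S rule: finite_induct)
    (auto simp: matrix_vector_mult_add_rdistrib scaleR_mv)

context prob begin

lemma finA: "finite A" using finP by (simp add: A_def)

lemma comb_normal:
  assumes S: "S \<subseteq> A" "finite S" and l: "\<forall>p\<in>S. 0 \<le> l p"
  shows "(\<Sum>p\<in>S. l p *\<^sub>R fst p) \<in> normal_cone \<Theta> (g xb)"
  unfolding normal_cone_def
proof (clarify)
  fix y assume y: "y \<in> \<Theta>"
  have "inner (\<Sum>p\<in>S. l p *\<^sub>R fst p) (y - g xb) = (\<Sum>p\<in>S. l p * (inner (fst p) y - inner (fst p) (g xb)))"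
    by (simp add: inner_sum_left inner_diff_right right_diff_distrib sum_subtractf)
  also have "\<dots> = (\<Sum>p\<in>S. l p * (inner (fst p) y - snd p))"
    using S by (intro sum.cong) (auto simp: A_def)
  also have "\<dots> \<le> 0"
  proof (rule sum_nonpos)
    fix p assume p: "p \<in> S"
    have "inner (fst p) y \<le> snd p" using y p S unfolding Theta A_def by auto
    then show "l p * (inner (fst p) y - snd p) \<le> 0" using l p by (simp add: mult_nonneg_nonpos)
  qed
  finally show "inner (\<Sum>p\<in>S. l p *\<^sub>R fst p) (y - g xb) \<le> 0" .
qed

lemma tJ_inner: "inner d (transpose (Jg xb) *v a) = inner a (Jg xb *v d)"
  by (simp add: inner_commute[of d] dot_lmul_matrix)

lemma multiplier_exists:
  assumes grow: "\<exists>\<epsilon>>0. \<forall>x. g x \<in> \<Theta> \<and> dist x xb < \<epsilon> \<longrightarrow> f xb \<le> f x"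
  shows "\<exists>yb \<in> normal_cone \<Theta> (g xb). Df xb + transpose (Jg xb) *v yb = 0"
proof (cases "- Df xb \<in> {\<Sum>p\<in>A. l p *\<^sub>R (transpose (Jg xb) *v fst p) | l. \<forall>p\<in>A. (0::real) \<le> l p}")
  case True
  then obtain l where l: "\<forall>p\<in>A. 0 \<le> l p" "- Df xb = (\<Sum>p\<in>A. l p *\<^sub>R (transpose (Jg xb) *v fst p))"
    by auto
  have "(\<Sum>p\<in>A. l p *\<^sub>R fst p) \<in> normal_cone \<Theta> (g xb)" using l finA by (intro comb_normal) auto
  moreover have "transpose (Jg xb) *v (\<Sum>p\<in>A. l p *\<^sub>R fst p) = - Df xb"
    using l(2) finA by (simp add: mv_sum del: transpose_matrix_vector)
  then have "Df xb + transpose (Jg xb) *v (\<Sum>p\<in>A. l p *\<^sub>R fst p) = 0" by simp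
  ultimately show ?thesis by blast
next
  case False
  obtain d where d: "inner d (- Df xb) < 0" "\<forall>p\<in>A. inner d (transpose (Jg xb) *v fst p) \<ge> 0"
    using cone_sep[OF finA False] by blast
  have "\<forall>p\<in>A. inner (fst p) (Jg xb *v (- d)) \<le> 0"
    using d(2) by (simp add: tJ_inner[symmetric] del: transpose_matrix_vector)
  then have "inner (Df xb) (- d) \<ge> 0" using first_order grow by blast
  then show ?thesis using d(1) by (simp add: inner_commute)
qed

lemma yQ:
  "inner v ((\<Sum>i\<in>UNIV. yb $ i *\<^sub>R Hg i xb) *v v) = inner yb (Qv v)"
proof -
  have "inner v ((\<Sum>i\<in>UNIV. yb $ i *\<^sub>R Hg i xb) *v v) = (\<Sum>i\<in>UNIV. yb $ i * inner v (Hg i xb *v v))"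
    by (simp add: mat_sum_mv inner_sum_right)
  also have "\<dots> = (\<Sum>i\<in>UNIV. yb $ i * (Qv v $ i))"
    by (simp add: Qv_def inner_commute)
  also have "\<dots> = inner yb (Qv v)" by (simp add: inner_vec_def)
  finally show ?thesis .
qed

end


context prob begin

lemma so_main:
  assumes yb: "yb \<in> normal_cone \<Theta> (g xb)" "Df xb + transpose (Jg xb) *v yb = 0"
      and uniq: "\<forall>y. y \<in> normal_cone \<Theta> (g xb) \<and> Df xb + transpose (Jg xb) *v y = 0 \<longrightarrow> y = yb"
    and v: "v \<in> critical_cone {x. g x \<in> \<Theta>} xb (- Df xb)"
    and zn: "(z, v) \<in> regular_normal_cone {(x, Df x) | x. True} (xb, Df xb)"
    and \<sigma>: "\<sigma> \<ge> 0"
    and grow: "\<exists>\<epsilon>>0. \<forall>x. g x \<in> \<Theta> \<and> dist x xb < \<epsilon> \<longrightarrow> f x \<ge> f xb + \<sigma> / 2 * (norm (x - xb))\<^sup>2"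
  shows "\<sigma> * (norm v)\<^sup>2 \<le> - inner z v + inner yb (Qv v)"
proof -
  have vT: "v \<in> tangent_cone {x. g x \<in> \<Theta>} xb" and Dv: "inner (Df xb) v = 0"
    using v by (auto simp: critical_cone_def)
  have v1: "\<forall>p\<in>A. inner (fst p) (Jg xb *v v) \<le> 0" using tangent_lin[OF vT] by blast
  have grow0: "\<exists>\<epsilon>>0. \<forall>x. g x \<in> \<Theta> \<and> dist x xb < \<epsilon> \<longrightarrow> f xb \<le> f x"
  proof -
    obtain \<epsilon> where "\<epsilon> > 0" "\<forall>x. g x \<in> \<Theta> \<and> dist x xb < \<epsilon> \<longrightarrow> f x \<ge> f xb + \<sigma> / 2 * (norm (x - xb))\<^sup>2"
      using grow by blast
    moreover have "0 \<le> \<sigma> / 2 * (norm (x - xb))\<^sup>2" for x using \<sigma> by simp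
    ultimately show ?thesis by (smt (verit))
  qed
  define I0 where "I0 = {p\<in>A. inner (fst p) (Jg xb *v v) = 0}"
  have finI0: "finite I0" using finA by (simp add: I0_def)
  have I0A: "I0 \<subseteq> A" by (auto simp: I0_def)
  define h where "h (k :: ((real^'m) \<times> real) option) = (case k of None \<Rightarrow> ((0::real^'n), (-1::real))
       | Some p \<Rightarrow> (transpose (Jg xb) *v fst p, inner (fst p) (Qv v)))" for k
  define S where "S = insert None (Some ` I0)"
  have finS: "finite S" using finI0 by (simp add: S_def)
  define \<gamma> where "\<gamma> = \<sigma> * (norm v)\<^sup>2 + inner z v"
  show ?thesis
  proof (cases "(- Df xb, \<gamma>) \<in> {\<Sum>k\<in>S. l k *\<^sub>R h k | l. \<forall>k\<in>S. (0::real) \<le> l k}")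
    case True
    then obtain l where l: "\<forall>k\<in>S. 0 \<le> l k" "(- Df xb, \<gamma>) = (\<Sum>k\<in>S. l k *\<^sub>R h k)" by auto
    have sumS: "(\<Sum>k\<in>S. l k *\<^sub>R h k) = l None *\<^sub>R h None + (\<Sum>p\<in>I0. l (Some p) *\<^sub>R h (Some p))"
      using finI0 by (simp add: S_def sum.insert sum.reindex)
    have e1: "- Df xb = (\<Sum>p\<in>I0. l (Some p) *\<^sub>R (transpose (Jg xb) *v fst p))"
      using arg_cong[OF l(2), of fst] unfolding sumS by (simp add: fst_sum h_def)
    have e2: "\<gamma> = - l None + (\<Sum>p\<in>I0. l (Some p) * inner (fst p) (Qv v))"
      using arg_cong[OF l(2), of snd] unfolding sumS by (simp add: snd_sum h_def)
    define y' where "y' = (\<Sum>p\<in>I0. l (Some p) *\<^sub>R fst p)"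
    have y'N: "y' \<in> normal_cone \<Theta> (g xb)"
      unfolding y'_def using I0A finI0 l(1) by (intro comb_normal) (auto simp: S_def)
    have "transpose (Jg xb) *v y' = - Df xb"
      using e1 finI0 by (simp add: y'_def mv_sum del: transpose_matrix_vector)
    then have "y' = yb" using uniq y'N by simp
    have "inner y' (Qv v) = (\<Sum>p\<in>I0. l (Some p) * inner (fst p) (Qv v))"
      unfolding y'_def by (simp add: inner_sum_left)
    also have "\<dots> = \<gamma> + l None" using e2 by simp
    finally have "inner yb (Qv v) \<ge> \<gamma>" using \<open>y' = yb\<close> using l(1) by (simp add: S_def)
    then show ?thesis by (simp add: \<gamma>_def)
  next
    case False
    obtain d where d: "inner d (- Df xb, \<gamma>) < 0" "\<forall>k\<in>S. inner d (h k) \<ge> 0"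
      using cone_sep[OF finS False] by blast
    obtain d1 d2 where dd: "d = (d1, d2)" by (cases d)
    have d2: "d2 \<le> 0" using d(2) by (auto simp: S_def h_def dd)
    have hp: "inner (fst p) (Jg xb *v d1) + d2 * inner (fst p) (Qv v) \<ge> 0" if "p \<in> I0" for p
      using d(2) that by (auto simp: S_def h_def dd tJ_inner simp del: transpose_matrix_vector)
    have dt: "- inner d1 (Df xb) + d2 * \<gamma> < 0" using d(1) by (simp add: dd)
    show ?thesis
    proof (cases "d2 < 0")
      case True
      define r where "r = - d2"
      have r: "r > 0" using True by (simp add: r_def)
      define u where "u = (- 1 / r) *\<^sub>R d1"
      have u1: "\<forall>p\<in>A. inner (fst p) (Jg xb *v v) = 0 \<longrightarrow> inner (fst p) (Jg xb *v u + Qv v) \<le> 0"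
      proof (intro ballI impI)
        fix p assume p: "p \<in> A" "inner (fst p) (Jg xb *v v) = 0"
        then have pI: "p \<in> I0" by (simp add: I0_def)
        have "inner (fst p) (Jg xb *v u + Qv v) = (- inner (fst p) (Jg xb *v d1) + r * inner (fst p) (Qv v)) / r"
        proof -
          have Ju: "Jg xb *v u = (- 1 / r) *\<^sub>R (Jg xb *v d1)" unfolding u_def by (rule matrix_vector_mult_scaleR)
          show ?thesis using r unfolding Ju by (simp add: inner_add_right inner_diff_right field_simps)
        qed
        also have "\<dots> \<le> 0" using hp[OF pI] r by (intro divide_nonpos_pos) (auto simp: r_def)
        finally show "inner (fst p) (Jg xb *v u + Qv v) \<le> 0" .
      qed
      have core: "\<sigma> * (norm v)\<^sup>2 \<le> - inner z v + inner (Df xb) u"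
        by (rule second_order_core[OF v1 u1 Dv zn \<sigma> grow])
      have "inner (Df xb) u = - inner d1 (Df xb) / r" by (simp add: u_def inner_commute)
      also have "\<dots> < \<gamma>" using dt r by (simp add: r_def divide_less_eq algebra_simps)
      finally show ?thesis using core by (simp add: \<gamma>_def)
    next
      case False
      then have d20: "d2 = 0" using d2 by simp
      have hp0: "\<forall>p\<in>I0. inner (fst p) (Jg xb *v d1) \<ge> 0" using hp d20 by simp
      have Dd: "inner d1 (Df xb) > 0" using dt d20 by simp
      have "\<forall>p\<in>A. eventually (\<lambda>\<epsilon>. inner (fst p) (Jg xb *v (v + \<epsilon> *\<^sub>R (- d1))) \<le> 0) (at_right 0)"
      proof
        fix p assume p: "p \<in> A"
        have eq: "inner (fst p) (Jg xb *v (v + \<epsilon> *\<^sub>R (- d1))) =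
            inner (fst p) (Jg xb *v v) - \<epsilon> * inner (fst p) (Jg xb *v d1)" for \<epsilon>
          by (simp add: matrix_vector_mult_diff_distrib matrix_vector_right_distrib matrix_vector_mult_scaleR inner_add_right inner_diff_right)
        show "eventually (\<lambda>\<epsilon>. inner (fst p) (Jg xb *v (v + \<epsilon> *\<^sub>R (- d1))) \<le> 0) (at_right 0)"
        proof (cases "p \<in> I0")
          case True
          then have z0: "inner (fst p) (Jg xb *v v) = 0" by (simp add: I0_def)
          have a0: "inner (fst p) (Jg xb *v d1) \<ge> 0" using hp0 True by blast
          show ?thesis using eventually_at_right_less[of "0::real"]
          proof eventually_elim
            case (elim \<epsilon>)
            then show ?case unfolding eq using z0 a0 by simp
          qed
        next
          case False
          then have neg: "inner (fst p) (Jg xb *v v) < 0" using v1 p by (force simp: I0_def)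
          have "((\<lambda>\<epsilon>. inner (fst p) (Jg xb *v v) - \<epsilon> * inner (fst p) (Jg xb *v d1)) \<longlongrightarrow>
              inner (fst p) (Jg xb *v v) - 0 * inner (fst p) (Jg xb *v d1)) (at_right 0)"
            by (intro tendsto_intros)
          then have "eventually (\<lambda>\<epsilon>. inner (fst p) (Jg xb *v v) - \<epsilon> * inner (fst p) (Jg xb *v d1) < 0) (at_right 0)"
            using neg by (intro order_tendstoD(2)) auto
          then show ?thesis unfolding eq by eventually_elim simp
        qed
      qed
      from eventually_ball_finite[OF finA this] eventually_at_right_less[of "0::real"]
      have "eventually (\<lambda>\<epsilon>. \<epsilon> > 0 \<and> (\<forall>p\<in>A. inner (fst p) (Jg xb *v (v + \<epsilon> *\<^sub>R (- d1))) \<le> 0)) (at_right 0)"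
        by eventually_elim auto
      then obtain \<epsilon> where \<epsilon>: "\<epsilon> > 0" "\<forall>p\<in>A. inner (fst p) (Jg xb *v (v + \<epsilon> *\<^sub>R (- d1))) \<le> 0"
        using ev_ex by blast
      have "inner (Df xb) (v + \<epsilon> *\<^sub>R (- d1)) \<ge> 0" using first_order[OF \<epsilon>(2) grow0] .
      then have "\<epsilon> * inner d1 (Df xb) \<le> 0" using Dv by (simp add: inner_diff_right inner_commute)
      then have False using \<epsilon>(1) Dd by (simp add: mult_le_0_iff)
      then show ?thesis ..
    qed
  qed
qed

end


lemma poly_rep:
  assumes "polyhedron (S :: 'a::euclidean_space set)"
  shows "\<exists>P. finite P \<and> S = {y. \<forall>p\<in>P. inner (fst p) y \<le> snd p}"
proof -
  obtain F where F: "finite F" "S = \<Inter>F" "\<forall>h\<in>F. \<exists>a b. a \<noteq> 0 \<and> h = {x. a \<bullet> x \<le> b}"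
    using assms unfolding polyhedron_def by blast
  then have "\<forall>h\<in>F. \<exists>q. h = {x. fst q \<bullet> x \<le> snd q}" by fastforce
  then obtain ab where ab: "\<forall>h\<in>F. h = {x. fst (ab h) \<bullet> x \<le> snd (ab h)}" by (rule bchoice[elim_format]) blast
  show ?thesis
  proof (intro exI[of _ "ab ` F"] conjI)
    show "finite (ab ` F)" using F by simp
    show "S = {y. \<forall>p\<in>ab ` F. fst p \<bullet> y \<le> snd p}"
    proof (rule set_eqI)
      fix y
      have "y \<in> S \<longleftrightarrow> (\<forall>h\<in>F. y \<in> h)" using F by auto
      also have "\<dots> \<longleftrightarrow> (\<forall>h\<in>F. fst (ab h) \<bullet> y \<le> snd (ab h))"
      proof -
        have "y \<in> h \<longleftrightarrow> fst (ab h) \<bullet> y \<le> snd (ab h)" if "h \<in> F" for h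
          using ab that by blast
        then show ?thesis by blast
      qed
      finally show "y \<in> S \<longleftrightarrow> y \<in> {y. \<forall>p\<in>ab ` F. fst p \<bullet> y \<le> snd p}" by auto
    qed
  qed
qed

theorem theorem7p3:
  fixes f :: "real^'n \<Rightarrow> real" and Df :: "real^'n \<Rightarrow> real^'n"
    and g :: "real^'n \<Rightarrow> real^'m" and Jg :: "real^'n \<Rightarrow> real^'n^'m"
    and Hg :: "'m \<Rightarrow> real^'n \<Rightarrow> real^'n^'n"
    and \<Theta> :: "(real^'m) set" and xb :: "real^'n"
  assumes poly: "polyhedron \<Theta>" and nonempty: "\<Theta> \<noteq> {}"
    and feas: "g xb \<in> \<Theta>"
    and locmin: "\<exists>\<epsilon>>0. \<forall>x. g x \<in> \<Theta> \<and> dist x xb < \<epsilon> \<longrightarrow> f xb \<le> f x"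
    and f_C11: "\<exists>\<delta>>0. \<exists>L. (\<forall>x\<in>ball xb \<delta>. (f has_derivative (\<lambda>h. inner (Df x) h)) (at x))
                   \<and> (\<forall>x\<in>ball xb \<delta>. \<forall>y\<in>ball xb \<delta>. norm (Df x - Df y) \<le> L * dist x y)"
    and g_C2: "\<exists>\<delta>>0. \<forall>x\<in>ball xb \<delta>. (g has_derivative (\<lambda>h. Jg x *v h)) (at x)
                   \<and> (\<forall>i. ((\<lambda>u. Jg u $ i) has_derivative (\<lambda>h. Hg i x *v h)) (at x))
                   \<and> (\<forall>i. continuous_on (ball xb \<delta>) (Hg i))"
    and MSCQ: "\<exists>U \<kappa>. open U \<and> xb \<in> U \<and> \<kappa> > 0 \<and>
                   (\<forall>x\<in>U. infdist x {x. g x \<in> \<Theta>} \<le> \<kappa> * infdist (g x) \<Theta>)"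
  shows "(\<exists>yb \<in> normal_cone \<Theta> (g xb). Df xb + transpose (Jg xb) *v yb = 0)
     \<and> (\<forall>yb. yb \<in> normal_cone \<Theta> (g xb) \<and> Df xb + transpose (Jg xb) *v yb = 0 \<and>
            (\<forall>y. y \<in> normal_cone \<Theta> (g xb) \<and> Df xb + transpose (Jg xb) *v y = 0 \<longrightarrow> y = yb) \<longrightarrow>
          (\<forall>w \<in> uminus ` critical_cone {x. g x \<in> \<Theta>} xb (- Df xb).
             \<forall>z \<in> regular_second_subdiff Df xb w.
               inner z w + inner w ((\<Sum>i\<in>UNIV. yb $ i *\<^sub>R Hg i xb) *v w) \<ge> 0)
        \<and> (\<forall>\<sigma>>0. (\<exists>\<epsilon>>0. \<forall>x. g x \<in> \<Theta> \<and> dist x xb < \<epsilon> \<longrightarrow>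
                        f x \<ge> f xb + \<sigma> / 2 * (norm (x - xb))\<^sup>2) \<longrightarrow>
             (\<forall>w \<in> uminus ` critical_cone {x. g x \<in> \<Theta>} xb (- Df xb).
                \<forall>z \<in> regular_second_subdiff Df xb w.
                  inner z w + inner w ((\<Sum>i\<in>UNIV. yb $ i *\<^sub>R Hg i xb) *v w) \<ge> \<sigma> * (norm w)\<^sup>2)))"
proof -
  obtain P where P: "finite P" "\<Theta> = {y. \<forall>p\<in>P. inner (fst p) y \<le> snd p}"
    using poly_rep[OF poly] by blast
  obtain \<delta>f L where fL: "\<delta>f > 0" "\<forall>x\<in>ball xb \<delta>f. (f has_derivative (\<lambda>h. inner (Df x) h)) (at x)"
      "\<forall>x\<in>ball xb \<delta>f. \<forall>y\<in>ball xb \<delta>f. norm (Df x - Df y) \<le> L * dist x y"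
    using f_C11 by blast
  obtain \<delta>g where \<delta>g: "\<delta>g > 0" "\<forall>x\<in>ball xb \<delta>g. (g has_derivative (\<lambda>h. Jg x *v h)) (at x)
                   \<and> (\<forall>i. ((\<lambda>u. Jg u $ i) has_derivative (\<lambda>h. Hg i x *v h)) (at x))
                   \<and> (\<forall>i. continuous_on (ball xb \<delta>g) (Hg i))"
    using g_C2 by blast
  have gder: "\<forall>x\<in>ball xb \<delta>g. (g has_derivative (\<lambda>h. Jg x *v h)) (at x)" using \<delta>g by blast
  have Jgder: "\<forall>i. ((\<lambda>u. Jg u $ i) has_derivative (\<lambda>h. Hg i xb *v h)) (at xb)"
    using \<delta>g by auto
  obtain U \<kappa> where U: "open U" "xb \<in> U" "\<kappa> > 0"
      "\<forall>x\<in>U. infdist x {x. g x \<in> \<Theta>} \<le> \<kappa> * infdist (g x) \<Theta>"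
    using MSCQ by blast
  interpret pr: prob f Df g Jg Hg \<Theta> xb P \<delta>f L \<delta>g U \<kappa>
    by (rule prob.intro) (use P fL \<delta>g(1) gder Jgder U feas in \<open>simp_all\<close>)
  have key: "inner z w + inner w ((\<Sum>i\<in>UNIV. yb $ i *\<^sub>R Hg i xb) *v w) \<ge> \<sigma> * (norm w)\<^sup>2"
    if yb: "yb \<in> normal_cone \<Theta> (g xb)" "Df xb + transpose (Jg xb) *v yb = 0"
      "\<forall>y. y \<in> normal_cone \<Theta> (g xb) \<and> Df xb + transpose (Jg xb) *v y = 0 \<longrightarrow> y = yb"
      and \<sigma>: "\<sigma> \<ge> 0"
      and grow: "\<exists>\<epsilon>>0. \<forall>x. g x \<in> \<Theta> \<and> dist x xb < \<epsilon> \<longrightarrow> f x \<ge> f xb + \<sigma> / 2 * (norm (x - xb))\<^sup>2"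
      and w: "w \<in> uminus ` critical_cone {x. g x \<in> \<Theta>} xb (- Df xb)"
      and z: "z \<in> regular_second_subdiff Df xb w"
    for yb \<sigma> w z
  proof -
    obtain v where v: "v \<in> critical_cone {x. g x \<in> \<Theta>} xb (- Df xb)" "w = - v" using w by blast
    have zn: "(z, v) \<in> regular_normal_cone {(x, Df x) | x. True} (xb, Df xb)"
      using z v by (simp add: regular_second_subdiff_def)
    have m: "\<sigma> * (norm v)\<^sup>2 \<le> - inner z v + inner yb (pr.Qv v)"
      by (rule pr.so_main[OF yb v(1) zn \<sigma> grow])
    have "inner w ((\<Sum>i\<in>UNIV. yb $ i *\<^sub>R Hg i xb) *v w) = inner v ((\<Sum>i\<in>UNIV. yb $ i *\<^sub>R Hg i xb) *v v)"
    proof -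
      have "(\<Sum>i\<in>UNIV. yb $ i *\<^sub>R Hg i xb) *v w = (-1) *\<^sub>R ((\<Sum>i\<in>UNIV. yb $ i *\<^sub>R Hg i xb) *v v)"
        using v(2) matrix_vector_mult_scaleR[of _ "-1" v] by simp
      then show ?thesis using v(2) by simp
    qed
    then show ?thesis using m v(2) by (simp add: pr.yQ)
  qed
  show ?thesis
  proof (intro conjI allI impI)
    show "\<exists>yb \<in> normal_cone \<Theta> (g xb). Df xb + transpose (Jg xb) *v yb = 0"
      using pr.multiplier_exists locmin by blast
  next
    fix yb assume yb: "yb \<in> normal_cone \<Theta> (g xb) \<and> Df xb + transpose (Jg xb) *v yb = 0 \<and>
            (\<forall>y. y \<in> normal_cone \<Theta> (g xb) \<and> Df xb + transpose (Jg xb) *v y = 0 \<longrightarrow> y = yb)"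
    have yb1: "yb \<in> normal_cone \<Theta> (g xb)" and yb2: "Df xb + transpose (Jg xb) *v yb = 0"
      and yb3: "\<forall>y. y \<in> normal_cone \<Theta> (g xb) \<and> Df xb + transpose (Jg xb) *v y = 0 \<longrightarrow> y = yb"
      using yb by blast+
    have grow0: "\<exists>\<epsilon>>0. \<forall>x. g x \<in> \<Theta> \<and> dist x xb < \<epsilon> \<longrightarrow> f x \<ge> f xb + 0 / 2 * (norm (x - xb))\<^sup>2"
      using locmin by simp
    show "\<forall>w \<in> uminus ` critical_cone {x. g x \<in> \<Theta>} xb (- Df xb).
             \<forall>z \<in> regular_second_subdiff Df xb w.
               inner z w + inner w ((\<Sum>i\<in>UNIV. yb $ i *\<^sub>R Hg i xb) *v w) \<ge> 0"
    proof (intro ballI)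
      fix w z assume w: "w \<in> uminus ` critical_cone {x. g x \<in> \<Theta>} xb (- Df xb)"
        and z: "z \<in> regular_second_subdiff Df xb w"
      show "inner z w + inner w ((\<Sum>i\<in>UNIV. yb $ i *\<^sub>R Hg i xb) *v w) \<ge> 0"
        using key[OF yb1 yb2 yb3 _ grow0 w z] by simp
    qed
    fix \<sigma> :: real
    assume "\<sigma> > 0" and grow: "\<exists>\<epsilon>>0. \<forall>x. g x \<in> \<Theta> \<and> dist x xb < \<epsilon> \<longrightarrow>
                        f x \<ge> f xb + \<sigma> / 2 * (norm (x - xb))\<^sup>2"
    show "\<forall>w \<in> uminus ` critical_cone {x. g x \<in> \<Theta>} xb (- Df xb).
                \<forall>z \<in> regular_second_subdiff Df xb w.
                  inner z w + inner w ((\<Sum>i\<in>UNIV. yb $ i *\<^sub>R Hg i xb) *v w) \<ge> \<sigma> * (norm w)\<^sup>2"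
    proof (intro ballI)
      fix w z assume w: "w \<in> uminus ` critical_cone {x. g x \<in> \<Theta>} xb (- Df xb)"
        and z: "z \<in> regular_second_subdiff Df xb w"
      show "inner z w + inner w ((\<Sum>i\<in>UNIV. yb $ i *\<^sub>R Hg i xb) *v w) \<ge> \<sigma> * (norm w)\<^sup>2"
        using key[OF yb1 yb2 yb3 _ grow w z] \<open>\<sigma> > 0\<close> by simp
    qed
  qed
qed


end
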